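(* Let $G$ be an abelian group, $n$ an integer, $X$ a metric compactum, $A\subset X$ a carrier of a nonzero element $\alpha\in\check{H}^n(X;G)$, and $B\subset X$ closed. Let $j_A:A\hookrightarrow A\cup B$ and $j_B:B\hookrightarrow A\cup B$ be the inclusions, and $j_A^*,j_B^*$ the induced homomorphisms on $\check{H}^n(\,\cdot\,;G)$. Then $A\subset B$ if and only if $\ker(j_B^* )\subset\ker(j_A^* )$.
   Context: $\check{H}^k(\,\cdot\,;G)$ is reduced Čech cohomology. For closed $A\subset X$, $i_A:A\hookrightarrow X$ is the inclusion. A closed nonempty set $A\subset X$ is a (cohomological) carrier of a nonzero $\alpha\in\check{H}^n(X;G)$ if $i_A^*(\alpha)\neq0$ and $i_B^*(\alpha)=0$ for every proper closed subset $B\subsetneq A$. *)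

theory Defs
  imports "HOL-Analysis.Analysis"
begin

text \<open>Reduced Cech cohomology of compact subsets Y of a metric space, with coefficients
in an abelian group 'g, built from finite covers of Y by (ambient) open sets.  Ordered n-simplices of the
nerve (relative to Y) are lists of n+1 cover members whose common intersection meets Y.
The empty list is a (-1)-simplex iff Y is nonempty, so the usual coboundary formula
yields the augmented cochain complex, whose cohomology is reduced cohomology.\<close>

definition cech_simplices :: "'a set \<Rightarrow> 'a set set \<Rightarrow> nat \<Rightarrow> 'a set list set" where
  "cech_simplices Y U k = {s. length s = k \<and> set s \<subseteq> U \<and> Y \<inter> \<Inter>(set s) \<noteq> {}}"

definition cech_delete :: "nat \<Rightarrow> 'b list \<Rightarrow> 'b list" where
  "cech_delete i s = take i s @ drop (Suc i) s"

definition cech_cobdry :: "('a set list \<Rightarrow> 'g::ab_group_add) \<Rightarrow> 'a set list \<Rightarrow> 'g" where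
  "cech_cobdry c s =
     (\<Sum>i<length s. if even i then c (cech_delete i s) else - c (cech_delete i s))"

definition cech_open_cover :: "'a::topological_space set \<Rightarrow> 'a set set \<Rightarrow> bool" where
  "cech_open_cover Y U \<longleftrightarrow> finite U \<and> (\<forall>V\<in>U. open V) \<and> Y \<subseteq> \<Union>U"

definition cech_cocycle :: "int \<Rightarrow> 'a set \<Rightarrow> 'a set set \<Rightarrow> ('a set list \<Rightarrow> 'g::ab_group_add) \<Rightarrow> bool" where
  "cech_cocycle n Y U z \<longleftrightarrow>
     n < -1 \<or> (\<forall>s\<in>cech_simplices Y U (nat (n + 2)). cech_cobdry z s = 0)"

definition cech_coboundary :: "int \<Rightarrow> 'a set \<Rightarrow> 'a set set \<Rightarrow> ('a set list \<Rightarrow> 'g::ab_group_add) \<Rightarrow> bool" where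
  "cech_coboundary n Y U z \<longleftrightarrow>
     n < -1 \<or> (\<exists>b. \<forall>s\<in>cech_simplices Y U (nat (n + 1)). z s = cech_cobdry b s)"

definition cech_refines_via :: "'a set set \<Rightarrow> 'a set set \<Rightarrow> ('a set \<Rightarrow> 'a set) \<Rightarrow> bool" where
  "cech_refines_via V U p \<longleftrightarrow> (\<forall>W\<in>V. p W \<in> U \<and> W \<subseteq> p W)"

type_synonym ('a, 'g) cech_rep = "'a set set \<times> ('a set list \<Rightarrow> 'g)"

definition cech_is_rep :: "int \<Rightarrow> 'a::topological_space set \<Rightarrow> ('a, 'g::ab_group_add) cech_rep \<Rightarrow> bool" where
  "cech_is_rep n Y r \<longleftrightarrow> cech_open_cover Y (fst r) \<and> cech_cocycle n Y (fst r) (snd r)"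

text \<open>two representing cocycles define the same element of the direct limit\<close>
definition cech_rel :: "int \<Rightarrow> 'a::topological_space set \<Rightarrow> ('a, 'g::ab_group_add) cech_rep \<Rightarrow> ('a, 'g) cech_rep \<Rightarrow> bool" where
  "cech_rel n Y r r' \<longleftrightarrow>
     (\<exists>W p q. cech_open_cover Y W \<and> cech_refines_via W (fst r) p \<and> cech_refines_via W (fst r') q \<and>
        cech_coboundary n Y W (\<lambda>s. snd r (map p s) - snd r' (map q s)))"

definition cech_class :: "int \<Rightarrow> 'a::topological_space set \<Rightarrow> ('a, 'g::ab_group_add) cech_rep \<Rightarrow> ('a, 'g) cech_rep set" where
  "cech_class n Y r = {r'. cech_is_rep n Y r' \<and> cech_rel n Y r r'}"

definition cech_H :: "int \<Rightarrow> 'a::topological_space set \<Rightarrow> ('a, 'g::ab_group_add) cech_rep set set" where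
  "cech_H n Y = cech_class n Y ` {r. cech_is_rep n Y r}"

definition cech_zero :: "int \<Rightarrow> 'a::topological_space set \<Rightarrow> ('a, 'g::ab_group_add) cech_rep set" where
  "cech_zero n Y = cech_class n Y ({UNIV}, \<lambda>_. 0)"

definition cech_incl :: "int \<Rightarrow> 'a::topological_space set \<Rightarrow> 'a set \<Rightarrow> ('a, 'g::ab_group_add) cech_rep set \<Rightarrow> ('a, 'g) cech_rep set" where
  "cech_incl n Y' Y c = cech_class n Y' (SOME r. r \<in> c)"

definition cech_kernel :: "int \<Rightarrow> 'a::topological_space set \<Rightarrow> 'a set \<Rightarrow> ('a, 'g::ab_group_add) cech_rep set set" where
  "cech_kernel n Y' Y = {c \<in> cech_H n Y. cech_incl n Y' Y c = cech_zero n Y'}"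

definition cech_carrier :: "int \<Rightarrow> 'a::topological_space set \<Rightarrow> 'a set \<Rightarrow> ('a, 'g::ab_group_add) cech_rep set \<Rightarrow> bool" where
  "cech_carrier n X A \<alpha> \<longleftrightarrow> closed A \<and> A \<subseteq> X \<and> A \<noteq> {} \<and>
     cech_incl n A X \<alpha> \<noteq> cech_zero n A \<and>
     (\<forall>B. closed B \<and> B \<subset> A \<longrightarrow> cech_incl n B X \<alpha> = cech_zero n B)"

end

theory Submission
  imports Defs
begin


definition sg :: "nat \<Rightarrow> 'g::ab_group_add \<Rightarrow> 'g" where
  "sg i x = (if even i then x else - x)"

lemma cobdry_sg: "cech_cobdry c s = (\<Sum>i<length s. sg i (c (cech_delete i s)))"
  by (simp add: cech_cobdry_def sg_def)

lemma length_delete[simp]: "i < length s \<Longrightarrow> length (cech_delete i s) = length s - 1"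
  by (simp add: cech_delete_def)

lemma nth_delete: "i < length s \<Longrightarrow> k < length s - 1 \<Longrightarrow>
  cech_delete i s ! k = (if k < i then s ! k else s ! Suc k)"
  by (auto simp: cech_delete_def nth_append min_def)

lemma delete_map: "cech_delete i (map f s) = map f (cech_delete i s)"
  by (simp add: cech_delete_def take_map drop_map)

lemma set_delete: "set (cech_delete i s) \<subseteq> set s"
  unfolding cech_delete_def using set_take_subset set_drop_subset by fastforce

lemma delete_delete: "a < c \<Longrightarrow> c < length s \<Longrightarrow>
   cech_delete a (cech_delete c s) = cech_delete (c - 1) (cech_delete a s)"
  by (rule nth_equalityI) (auto simp: nth_delete)

lemma sg_sum: "sg i (sum f A) = sum (\<lambda>x. sg i (f x)) A"
  by (simp add: sg_def sum_negf)

lemma sg_sg: "sg i (sg j x) = sg (i + j) x"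
  by (simp add: sg_def)

lemma sg_Suc: "sg (Suc i) x = - sg i x"
  by (simp add: sg_def)

lemma sg_add: "sg i (x + y) = sg i x + sg i y" and sg_minus: "sg i (- x) = - sg i x"
  and sg_diff: "sg i (x - y) = sg i x - sg i y"
  by (auto simp: sg_def)

lemma cobdry_map: "cech_cobdry c (map f s) = cech_cobdry (\<lambda>t. c (map f t)) s"
  by (simp add: cech_cobdry_def delete_map cong: if_cong)

lemma cobdry_diff: "cech_cobdry (\<lambda>t. a t - b t) s = cech_cobdry a s - cech_cobdry b s"
  by (simp add: cobdry_sg sg_diff sum_subtractf)

lemma cobdry_add: "cech_cobdry (\<lambda>t. a t + b t) s = cech_cobdry a s + cech_cobdry b s"
  by (simp add: cobdry_sg sg_add sum.distrib)

lemma cobdry_uminus: "cech_cobdry (\<lambda>t. - a t) s = - cech_cobdry a s"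
  by (simp add: cobdry_sg sg_minus sum_negf)

lemma cobdry_zero: "cech_cobdry (\<lambda>t. 0) s = 0"
  by (simp add: cech_cobdry_def cong: if_cong)

lemma cobdry_cobdry: "cech_cobdry (cech_cobdry b) s = 0"
proof -
  let ?L = "length s"
  define F where "F = (\<lambda>(i,j). sg (i + j) (b (cech_delete i (cech_delete j s))))"
  define T1 where "T1 = {(i,j). j < ?L \<and> i < ?L - 1 \<and> i < j}"
  define T2 where "T2 = {(i,j). j < ?L \<and> i < ?L - 1 \<and> j \<le> i}"
  have "cech_cobdry (cech_cobdry b) s = (\<Sum>j<?L. \<Sum>i<?L - 1. F (i,j))"
    by (simp add: cobdry_sg sg_sum sg_sg F_def add.commute)
  also have "\<dots> = (\<Sum>i<?L - 1. \<Sum>j<?L. F (i,j))"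
    by (rule sum.swap)
  also have "\<dots> = sum F ({..<?L - 1} \<times> {..<?L})"
    by (simp add: sum.cartesian_product case_prod_beta')
  also have "{..<?L - 1} \<times> {..<?L} = T1 \<union> T2" by (auto simp: T1_def T2_def)
  also have "sum F (T1 \<union> T2) = sum F T1 + sum F T2"
    by (rule sum.union_disjoint) (auto simp: T1_def T2_def intro: finite_subset[of _ "{..<?L} \<times> {..<?L}"])
  also have "sum F T1 = sum (\<lambda>x. F ((\<lambda>(i,j). (j, Suc i)) x)) T2"
  proof (rule sum.reindex_bij_betw[symmetric])
    show "bij_betw (\<lambda>(i,j). (j, Suc i)) T2 T1"
      by (rule bij_betwI[where g="\<lambda>(i,j). (j - 1, i)"]) (auto simp: T1_def T2_def)
  qed
  also have "\<dots> = - sum F T2"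
    unfolding sum_negf[symmetric]
  proof (rule sum.cong[OF refl])
    fix x assume "x \<in> T2"
    then obtain i j where x: "x = (i,j)" "j < ?L" "i < ?L - 1" "j \<le> i" by (auto simp: T2_def)
    then show "F ((\<lambda>(i,j). (j, Suc i)) x) = - F x"
      using delete_delete[of j "Suc i" s] by (simp add: F_def sg_def)
  qed
  finally show ?thesis by simp
qed

definition hP :: "('b \<Rightarrow> 'c) \<Rightarrow> ('b \<Rightarrow> 'c) \<Rightarrow> nat \<Rightarrow> 'b list \<Rightarrow> 'c list" where
  "hP f g i s = map f (take (Suc i) s) @ map g (drop i s)"
definition hQ :: "('b \<Rightarrow> 'c) \<Rightarrow> ('b \<Rightarrow> 'c) \<Rightarrow> nat \<Rightarrow> 'b list \<Rightarrow> 'c list" where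
  "hQ f g i s = map f (take i s) @ map g (drop i s)"
definition hop :: "('b \<Rightarrow> 'c) \<Rightarrow> ('b \<Rightarrow> 'c) \<Rightarrow> ('c list \<Rightarrow> 'g::ab_group_add) \<Rightarrow> 'b list \<Rightarrow> 'g" where
  "hop f g z s = (\<Sum>i<length s. sg i (z (hP f g i s)))"

lemma length_hP: "i < length s \<Longrightarrow> length (hP f g i s) = Suc (length s)"
  by (simp add: hP_def)
lemma nth_hP: "i < length s \<Longrightarrow> k \<le> length s \<Longrightarrow>
   hP f g i s ! k = (if k \<le> i then f (s!k) else g (s ! (k - 1)))"
  apply (auto simp: hP_def nth_append min_def)
  apply (subgoal_tac "i = length s - 1", auto)
  done
lemma length_hQ: "length (hQ f g i s) = length s"
  by (simp add: hQ_def)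
lemma nth_hQ: "i \<le> length s \<Longrightarrow> k < length s \<Longrightarrow>
   hQ f g i s ! k = (if k < i then f (s!k) else g (s ! k))"
  by (auto simp: hQ_def nth_append min_def)

lemma D1: "j < i \<Longrightarrow> i < length s \<Longrightarrow> cech_delete j (hP f g i s) = hP f g (i - 1) (cech_delete j s)"
  by (rule nth_equalityI) (auto simp: nth_delete length_hP nth_hP)
lemma D2: "i < length s \<Longrightarrow> cech_delete i (hP f g i s) = hQ f g i s"
  apply (rule nth_equalityI)
   apply (auto simp: nth_delete length_hP nth_hP length_hQ nth_hQ)
  done
lemma D3: "i < length s \<Longrightarrow> cech_delete (Suc i) (hP f g i s) = hQ f g (Suc i) s"
  by (rule nth_equalityI) (auto simp: nth_delete length_hP nth_hP length_hQ nth_hQ)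
lemma D4: "Suc i < j \<Longrightarrow> j \<le> length s \<Longrightarrow> cech_delete j (hP f g i s) = hP f g i (cech_delete (j - 1) s)"
  by (rule nth_equalityI) (auto simp: nth_delete length_hP nth_hP)

lemma sum_split4: "i < L \<Longrightarrow> (\<Sum>j<Suc L. G j) =
   (\<Sum>j<i. G j) + G i + G (Suc i) + (\<Sum>j\<in>{Suc (Suc i)..<Suc L}. G j)"
proof -
  assume i: "i < L"
  have "(\<Sum>j\<in>{0..<i}. G j) + (\<Sum>j\<in>{i..<Suc L}. G j) = (\<Sum>j\<in>{0..<Suc L}. G j)"
    using i by (intro sum.atLeastLessThan_concat) auto
  then have "(\<Sum>j<Suc L. G j) = (\<Sum>j\<in>{0..<i}. G j) + (\<Sum>j\<in>{i..<Suc L}. G j)"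
    by (simp add: lessThan_atLeast0 del: sum.op_ivl_Suc)
  also have "(\<Sum>j\<in>{i..<Suc L}. G j) = G i + G (Suc i) + (\<Sum>j\<in>{Suc (Suc i)..<Suc L}. G j)"
    using i by (simp add: sum.atLeast_Suc_lessThan add.assoc del: sum.op_ivl_Suc)
  finally show ?thesis by (simp add: lessThan_atLeast0 add.assoc)
qed

lemma homotopy:
  "cech_cobdry (hop f g z) s + hop f g (cech_cobdry z) s = z (map g s) - z (map f s)"
proof (cases s)
  case Nil
  then show ?thesis by (simp add: cobdry_sg hop_def)
next
  case (Cons a s')
  define L' where "L' = length s'"
  have L: "length s = Suc L'" using Cons L'_def by simp
  define F where "F k j = sg (k+j) (z (hP f g k (cech_delete j s)))" for k j
  have A: "cech_cobdry (hop f g z) s = (\<Sum>j<Suc L'. \<Sum>k<L'. F k j)"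
    unfolding cobdry_sg L
    by (rule sum.cong[OF refl]) (simp add: hop_def sg_sum sg_sg F_def L add.commute)
  define H1 where "H1 i = (\<Sum>j<i. - F (i - 1) j)" for i
  define H4 where "H4 i = (\<Sum>j\<in>{Suc i..<Suc L'}. - F i j)" for i
  have B: "hop f g (cech_cobdry z) s =
     (\<Sum>i<Suc L'. H1 i + (z (hQ f g i s) - z (hQ f g (Suc i) s)) + H4 i)"
    unfolding hop_def L
  proof (rule sum.cong[OF refl])
    fix i assume "i \<in> {..<Suc L'}"
    then have i: "i < length s" using L by simp
    have "sg i (cech_cobdry z (hP f g i s)) =
       (\<Sum>j<Suc (Suc L'). sg (i + j) (z (cech_delete j (hP f g i s))))"
      by (simp add: cobdry_sg length_hP[OF i] sg_sum sg_sg L del: sum.lessThan_Suc)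
    also have "\<dots> = (\<Sum>j<i. sg (i + j) (z (cech_delete j (hP f g i s))))
        + sg (i + i) (z (cech_delete i (hP f g i s)))
        + sg (i + Suc i) (z (cech_delete (Suc i) (hP f g i s)))
        + (\<Sum>j\<in>{Suc (Suc i)..<Suc (Suc L')}. sg (i + j) (z (cech_delete j (hP f g i s))))"
      by (rule sum_split4) (use i L in simp)
    also have "(\<Sum>j<i. sg (i + j) (z (cech_delete j (hP f g i s)))) = H1 i"
      unfolding H1_def
    proof (rule sum.cong[OF refl])
      fix j assume "j \<in> {..<i}"
      then have j: "j < i" by simp
      then obtain i' where i': "i = Suc i'" by (cases i) auto
      show "sg (i + j) (z (cech_delete j (hP f g i s))) = - F (i - 1) j"
        using D1[where f=f and g=g, OF j i] by (simp add: F_def i' sg_Suc)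
    qed
    also have "sg (i + i) (z (cech_delete i (hP f g i s))) = z (hQ f g i s)"
      using D2[where f=f and g=g, OF i] by (simp add: sg_def)
    also have "sg (i + Suc i) (z (cech_delete (Suc i) (hP f g i s))) = - z (hQ f g (Suc i) s)"
      using D3[where f=f and g=g, OF i] by (simp add: sg_def)
    also have "(\<Sum>j\<in>{Suc (Suc i)..<Suc (Suc L')}. sg (i + j) (z (cech_delete j (hP f g i s)))) = H4 i"
      unfolding H4_def
      apply (subst sum.shift_bounds_Suc_ivl)
    proof (rule sum.cong[OF refl])
      fix j assume "j \<in> {Suc i..<Suc L'}"
      then have j: "Suc i < Suc j" "Suc j \<le> length s" using L by auto
      show "sg (i + Suc j) (z (cech_delete (Suc j) (hP f g i s))) = - F i j"
        using D4[where f=f and g=g, OF j] by (simp add: F_def sg_Suc)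
    qed
    finally show "sg i (cech_cobdry z (hP f g i s)) =
         H1 i + (z (hQ f g i s) - z (hQ f g (Suc i) s)) + H4 i"
      by (simp add: algebra_simps)
  qed
  also have "\<dots> = (\<Sum>i<Suc L'. H1 i) + (\<Sum>i<Suc L'. z (hQ f g i s) - z (hQ f g (Suc i) s))
      + (\<Sum>i<Suc L'. H4 i)"
    by (simp add: sum.distrib)
  also have "(\<Sum>i<Suc L'. z (hQ f g i s) - z (hQ f g (Suc i) s)) = z (hQ f g 0 s) - z (hQ f g (Suc L') s)"
    using sum_lessThan_telescope'[of "\<lambda>i. z (hQ f g i s)" "Suc L'"] by simp
  also have "hQ f g 0 s = map g s" by (simp add: hQ_def)
  also have "hQ f g (Suc L') s = map f s" using L by (simp add: hQ_def)
  also have "(\<Sum>i<Suc L'. H1 i) = (\<Sum>k<L'. \<Sum>j<Suc k. - F k j)"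
    by (simp add: sum.lessThan_Suc_shift H1_def del: sum.lessThan_Suc)
  also have "(\<Sum>i<Suc L'. H4 i) = (\<Sum>k<L'. \<Sum>j\<in>{Suc k..<Suc L'}. - F k j)"
    by (simp add: H4_def)
  finally have B': "hop f g (cech_cobdry z) s =
     (\<Sum>k<L'. (\<Sum>j<Suc k. - F k j) + (\<Sum>j\<in>{Suc k..<Suc L'}. - F k j)) + (z (map g s) - z (map f s))"
    by (simp only: sum.distrib) (simp only: ac_simps)
  have C: "(\<Sum>k<L'. (\<Sum>j<Suc k. - F k j) + (\<Sum>j\<in>{Suc k..<Suc L'}. - F k j)) =
     - (\<Sum>k<L'. \<Sum>j<Suc L'. F k j)"
    unfolding sum_negf[symmetric]
  proof (rule sum.cong[OF refl])
    fix k assume "k \<in> {..<L'}"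
    then have "Suc k \<le> Suc L'" by simp
    then have "(\<Sum>j\<in>{0..<Suc k}. - F k j) + (\<Sum>j\<in>{Suc k..<Suc L'}. - F k j) = (\<Sum>j\<in>{0..<Suc L'}. - F k j)"
      by (intro sum.atLeastLessThan_concat) auto
    then show "(\<Sum>j<Suc k. - F k j) + (\<Sum>j\<in>{Suc k..<Suc L'}. - F k j) = (\<Sum>j<Suc L'. - F k j)"
      by (simp add: lessThan_atLeast0)
  qed
  have S: "(\<Sum>j<Suc L'. \<Sum>k<L'. F k j) = (\<Sum>k<L'. \<Sum>j<Suc L'. F k j)"
    by (rule sum.swap)
  show ?thesis unfolding A B' C S by (simp only: add.assoc[symmetric] right_minus add_0_left)
qed



lemma nat2: "\<not> n < -1 \<Longrightarrow> nat (n + 2) = Suc (nat (n + 1))" for n :: int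
  by (simp add: nat_eq_iff)

lemma simplices_mono: "Y' \<subseteq> Y \<Longrightarrow> cech_simplices Y' U k \<subseteq> cech_simplices Y U k"
  by (auto simp: cech_simplices_def)

lemma rep_mono: "cech_is_rep n Y r \<Longrightarrow> Y' \<subseteq> Y \<Longrightarrow> cech_is_rep n Y' r"
  unfolding cech_is_rep_def cech_open_cover_def cech_cocycle_def
  using simplices_mono by blast

lemma rel_mono: "cech_rel n Y r r' \<Longrightarrow> Y' \<subseteq> Y \<Longrightarrow> cech_rel n Y' r r'"
proof -
  assume r: "cech_rel n Y r r'" and Y: "Y' \<subseteq> Y"
  then obtain W p q where W: "cech_open_cover Y W" "cech_refines_via W (fst r) p" "cech_refines_via W (fst r') q"
    and cb: "cech_coboundary n Y W (\<lambda>s. snd r (map p s) - snd r' (map q s))"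
    unfolding cech_rel_def by blast
  have "cech_open_cover Y' W" using W(1) Y unfolding cech_open_cover_def by blast
  moreover have "cech_coboundary n Y' W (\<lambda>s. snd r (map p s) - snd r' (map q s))"
    using cb simplices_mono[OF Y] unfolding cech_coboundary_def by blast
  ultimately show ?thesis using W unfolding cech_rel_def by blast
qed

lemma simplices_map:
  assumes "cech_refines_via W U p" "s \<in> cech_simplices Y W k"
  shows "map p s \<in> cech_simplices Y U k"
proof -
  have "\<Inter>(set s) \<subseteq> \<Inter>(set (map p s))"
    using assms unfolding cech_refines_via_def cech_simplices_def by auto
  then show ?thesis using assms unfolding cech_refines_via_def cech_simplices_def by auto
qed

lemma rel_refl: "cech_is_rep n Y r \<Longrightarrow> cech_rel n Y r r"
  unfolding cech_rel_def cech_is_rep_def cech_coboundary_def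
  apply (rule exI[of _ "fst r"], rule exI[of _ id], rule exI[of _ id])
  apply (auto simp: cech_refines_via_def)
  apply (erule allE[of _ "\<lambda>_. 0"])
  apply (simp add: cobdry_zero)
  done

lemma rel_sym: "cech_rel n Y r r' \<Longrightarrow> cech_rel n Y r' r"
proof -
  assume "cech_rel n Y r r'"
  then obtain W p q where W: "cech_open_cover Y W" "cech_refines_via W (fst r) p" "cech_refines_via W (fst r') q"
    and cb: "cech_coboundary n Y W (\<lambda>s. snd r (map p s) - snd r' (map q s))"
    unfolding cech_rel_def by blast
  have "cech_coboundary n Y W (\<lambda>s. snd r' (map q s) - snd r (map p s))"
    using cb unfolding cech_coboundary_def
  proof (elim disjE exE)
    fix b assume "\<forall>s\<in>cech_simplices Y W (nat (n + 1)). snd r (map p s) - snd r' (map q s) = cech_cobdry b s"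
    then have "\<forall>s\<in>cech_simplices Y W (nat (n + 1)). snd r' (map q s) - snd r (map p s) = cech_cobdry (\<lambda>t. - b t) s"
      by (simp add: cobdry_uminus) (metis minus_diff_eq)
    then show "n < - 1 \<or> (\<exists>b. \<forall>s\<in>cech_simplices Y W (nat (n + 1)). snd r' (map q s) - snd r (map p s) = cech_cobdry b s)"
      by blast
  qed simp
  then show ?thesis using W unfolding cech_rel_def by blast
qed

lemma rel_trans:
  assumes rep2: "cech_is_rep n Y r2" and r12: "cech_rel n Y r1 r2" and r23: "cech_rel n Y r2 r3"
  shows "cech_rel n Y r1 r3"
proof -
  obtain W1 p1 q2 where W1: "cech_open_cover Y W1" "cech_refines_via W1 (fst r1) p1" "cech_refines_via W1 (fst r2) q2"
    and cb1: "cech_coboundary n Y W1 (\<lambda>s. snd r1 (map p1 s) - snd r2 (map q2 s))"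
    using r12 unfolding cech_rel_def by blast
  obtain W2 p2 q3 where W2: "cech_open_cover Y W2" "cech_refines_via W2 (fst r2) p2" "cech_refines_via W2 (fst r3) q3"
    and cb2: "cech_coboundary n Y W2 (\<lambda>s. snd r2 (map p2 s) - snd r3 (map q3 s))"
    using r23 unfolding cech_rel_def by blast
  define W where "W = (\<lambda>(a,b). a \<inter> b) ` (W1 \<times> W2)"
  define \<pi> where "\<pi> w = (SOME ab. ab \<in> W1 \<times> W2 \<and> w = fst ab \<inter> snd ab)" for w
  have \<pi>: "\<pi> w \<in> W1 \<times> W2 \<and> w = fst (\<pi> w) \<inter> snd (\<pi> w)" if "w \<in> W" for w
    unfolding \<pi>_def by (rule someI_ex) (use that W_def in auto)
  define \<pi>1 where "\<pi>1 = fst \<circ> \<pi>"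
  define \<pi>2 where "\<pi>2 = snd \<circ> \<pi>"
  have ref1: "cech_refines_via W W1 \<pi>1" and ref2: "cech_refines_via W W2 \<pi>2"
    unfolding cech_refines_via_def \<pi>1_def \<pi>2_def using \<pi> by (auto simp: mem_Times_iff)
  have cov: "cech_open_cover Y W"
  proof -
    have "finite W" using W1 W2 unfolding W_def cech_open_cover_def by auto
    moreover have "\<forall>V\<in>W. open V" using W1 W2 unfolding W_def cech_open_cover_def by auto
    moreover have "Y \<subseteq> \<Union>W"
    proof
      fix y assume "y \<in> Y"
      then obtain a b where "a \<in> W1" "b \<in> W2" "y \<in> a" "y \<in> b"
        using W1 W2 unfolding cech_open_cover_def by blast
      then show "y \<in> \<Union>W" unfolding W_def by blast
    qed
    ultimately show ?thesis unfolding cech_open_cover_def by blast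
  qed
  have refA: "cech_refines_via W (fst r1) (p1 \<circ> \<pi>1)" and refB: "cech_refines_via W (fst r3) (q3 \<circ> \<pi>2)"
    using ref1 ref2 W1(2) W2(3) unfolding cech_refines_via_def comp_def by (meson subset_trans)+
  define f where "f = q2 \<circ> \<pi>1"
  define g where "g = p2 \<circ> \<pi>2"
  have reff: "cech_refines_via W (fst r2) f" and refg: "cech_refines_via W (fst r2) g"
    using ref1 ref2 W1(3) W2(2) unfolding cech_refines_via_def f_def g_def comp_def by (meson subset_trans)+
  have "cech_coboundary n Y W (\<lambda>s. snd r1 (map (p1 \<circ> \<pi>1) s) - snd r3 (map (q3 \<circ> \<pi>2) s))"
  proof (cases "n < -1")
    case True then show ?thesis by (simp add: cech_coboundary_def)
  next
    case False
    obtain b1 where b1: "\<forall>s\<in>cech_simplices Y W1 (nat (n + 1)). snd r1 (map p1 s) - snd r2 (map q2 s) = cech_cobdry b1 s"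
      using cb1 False unfolding cech_coboundary_def by blast
    obtain b2 where b2: "\<forall>s\<in>cech_simplices Y W2 (nat (n + 1)). snd r2 (map p2 s) - snd r3 (map q3 s) = cech_cobdry b2 s"
      using cb2 False unfolding cech_coboundary_def by blast
    define z where "z = snd r2"
    have cocy: "\<forall>t\<in>cech_simplices Y (fst r2) (nat (n + 2)). cech_cobdry z t = 0"
      using rep2 False unfolding cech_is_rep_def cech_cocycle_def z_def by blast
    define b where "b t = b1 (map \<pi>1 t) - hop f g z t + b2 (map \<pi>2 t)" for t
    have "\<forall>s\<in>cech_simplices Y W (nat (n + 1)).
        snd r1 (map (p1 \<circ> \<pi>1) s) - snd r3 (map (q3 \<circ> \<pi>2) s) = cech_cobdry b s"
    proof
      fix s assume s: "s \<in> cech_simplices Y W (nat (n + 1))"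
      have e1: "snd r1 (map p1 (map \<pi>1 s)) - z (map f s) = cech_cobdry b1 (map \<pi>1 s)"
        using bspec[OF b1 simplices_map[OF ref1 s]] by (simp add: z_def f_def)
      have e2: "z (map g s) - snd r3 (map q3 (map \<pi>2 s)) = cech_cobdry b2 (map \<pi>2 s)"
        using bspec[OF b2 simplices_map[OF ref2 s]] by (simp add: z_def g_def)
      have h0: "hop f g (cech_cobdry z) s = 0"
        unfolding hop_def
      proof (rule sum.neutral, rule ballI)
        fix i assume "i \<in> {..<length s}"
        then have i: "i < length s" by simp
        have "hP f g i s \<in> cech_simplices Y (fst r2) (nat (n + 2))"
        proof -
          have len: "length (hP f g i s) = nat (n + 2)"
            using s nat2[OF False] length_hP[where f=f and g=g, OF i] by (simp add: cech_simplices_def)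
          have sub: "set (hP f g i s) \<subseteq> f ` set s \<union> g ` set s"
            unfolding hP_def using set_take_subset set_drop_subset by fastforce
          have sW: "set s \<subseteq> W" using s by (simp add: cech_simplices_def)
          have fw: "\<forall>w\<in>W. w \<subseteq> f w \<and> f w \<in> fst r2 \<and> w \<subseteq> g w \<and> g w \<in> fst r2"
            using reff refg unfolding cech_refines_via_def by blast
          have U: "set (hP f g i s) \<subseteq> fst r2"
          proof
            fix x assume "x \<in> set (hP f g i s)"
            then obtain w where "w \<in> set s" "x = f w \<or> x = g w" using sub by blast
            then show "x \<in> fst r2" using fw sW by blast
          qed
          have "\<Inter>(set s) \<subseteq> \<Inter>(set (hP f g i s))"
          proof (rule Inter_greatest)
            fix x assume "x \<in> set (hP f g i s)"
            then obtain w where w: "w \<in> set s" "x = f w \<or> x = g w" using sub by blast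
            then have "w \<subseteq> x" using fw sW by blast
            then show "\<Inter>(set s) \<subseteq> x" using w(1) by blast
          qed
          then show ?thesis using s len U by (auto simp: cech_simplices_def)
        qed
        then show "sg i (cech_cobdry z (hP f g i s)) = 0" using cocy by (simp add: sg_def)
      qed
      have hom: "cech_cobdry (hop f g z) s = z (map g s) - z (map f s)"
        using homotopy[of f g z s] h0 by simp
      have "snd r1 (map (p1 \<circ> \<pi>1) s) - snd r3 (map (q3 \<circ> \<pi>2) s) =
         (snd r1 (map p1 (map \<pi>1 s)) - z (map f s)) - (z (map g s) - z (map f s))
         + (z (map g s) - snd r3 (map q3 (map \<pi>2 s)))"
        by (simp add: algebra_simps)
      also have "\<dots> = cech_cobdry b s"
        unfolding e1 e2 hom[symmetric] b_def cobdry_add cobdry_diff cobdry_map[symmetric] ..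
      finally show "snd r1 (map (p1 \<circ> \<pi>1) s) - snd r3 (map (q3 \<circ> \<pi>2) s) = cech_cobdry b s" .
    qed
    then show ?thesis unfolding cech_coboundary_def by blast
  qed
  then show ?thesis unfolding cech_rel_def using cov refA refB by blast
qed

lemma class_mem: "r' \<in> cech_class n Y r \<longleftrightarrow> cech_is_rep n Y r' \<and> cech_rel n Y r r'"
  by (simp add: cech_class_def)

lemma in_own_class: "cech_is_rep n Y r \<Longrightarrow> r \<in> cech_class n Y r"
  by (simp add: class_mem rel_refl)

lemma class_eq:
  assumes "cech_is_rep n Y r" "cech_is_rep n Y r'" "cech_rel n Y r r'"
  shows "cech_class n Y r = cech_class n Y r'"
proof (rule set_eqI)
  fix x show "x \<in> cech_class n Y r \<longleftrightarrow> x \<in> cech_class n Y r'"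
    unfolding class_mem using assms rel_sym rel_trans by metis
qed

lemma H_elim: "c \<in> cech_H n Y \<Longrightarrow> (SOME r. r \<in> c) \<in> c"
  unfolding cech_H_def by (auto intro: someI in_own_class)

lemma H_rep: "c \<in> cech_H n Y \<Longrightarrow> r \<in> c \<Longrightarrow> cech_is_rep n Y r"
  unfolding cech_H_def by (auto simp: class_mem)

lemma H_rel: "r0 \<in> c \<Longrightarrow> c = cech_class n Y r \<Longrightarrow> cech_rel n Y r r0"
  by (auto simp: class_mem)

lemma zero_rep: "cech_is_rep n Y ({UNIV}, \<lambda>_. 0)"
  by (simp add: cech_is_rep_def cech_open_cover_def cech_cocycle_def cobdry_zero)



lemma set_delete_insert: "i < length t \<Longrightarrow> set t = insert (t ! i) (set (cech_delete i t))"
proof -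
  assume i: "i < length t"
  have "set t = set (take i t @ t ! i # drop (Suc i) t)" using id_take_nth_drop[OF i] by simp
  then show ?thesis by (auto simp: cech_delete_def)
qed

lemma cobdry_cong: "(\<And>i. i < length t \<Longrightarrow> c (cech_delete i t) = c' (cech_delete i t)) \<Longrightarrow>
   cech_cobdry c t = cech_cobdry c' t"
  unfolding cech_cobdry_def by (rule sum.cong) auto

lemma construct:
  fixes X A B :: "'a::metric_space set" and n :: int and U :: "'a set set"
    and z :: "'a set list \<Rightarrow> 'g::ab_group_add"
  assumes X: "compact X" and clA: "closed A" and clB: "closed B" and AX: "A \<subseteq> X" and BX: "B \<subseteq> X"
    and Ane: "A \<noteq> {}"
    and repz: "cech_is_rep n X (U, z)"
    and relC: "cech_rel n (A \<inter> B) ({UNIV}, \<lambda>_. 0) (U, z)"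
  shows "\<exists>r0. cech_is_rep n (A \<union> B) r0 \<and> cech_rel n B ({UNIV}, \<lambda>_. 0) r0 \<and> cech_rel n A r0 (U, z)"
proof -
  define C where "C = A \<inter> B"
  obtain W p' q where Wc: "cech_open_cover C W" and Wq: "cech_refines_via W U q"
    and cbW: "cech_coboundary n C W (\<lambda>s. 0 - z (map q s))"
    using relC unfolding cech_rel_def C_def by auto
  obtain b where bprop: "\<not> n < -1 \<Longrightarrow> \<forall>s\<in>cech_simplices C W (nat (n + 1)). z (map q s) = cech_cobdry b s"
  proof (cases "n < -1")
    case True then show ?thesis using that by blast
  next
    case False
    then obtain b0 where "\<forall>s\<in>cech_simplices C W (nat (n + 1)). 0 - z (map q s) = cech_cobdry b0 s"
      using cbW unfolding cech_coboundary_def by blast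
    then have "\<forall>s\<in>cech_simplices C W (nat (n + 1)). z (map q s) = cech_cobdry (\<lambda>t. - b0 t) s"
      by (simp add: cobdry_uminus) (metis minus_minus)
    then show ?thesis using that by blast
  qed
  have U: "cech_open_cover X U" and cocz: "\<not> n < -1 \<Longrightarrow> \<forall>t\<in>cech_simplices X U (nat (n + 2)). cech_cobdry z t = 0"
    using repz unfolding cech_is_rep_def cech_cocycle_def by auto
  have compC: "compact C"
  proof -
    have "C = X \<inter> C" using AX C_def by blast
    then show ?thesis using compact_Int_closed[OF X, of C] clA clB C_def by auto
  qed
  have "\<forall>x\<in>C. \<exists>w e. w \<in> W \<and> e > 0 \<and> cball x e \<subseteq> w"
  proof
    fix x assume "x \<in> C"
    then obtain w where "w \<in> W" "x \<in> w" using Wc unfolding cech_open_cover_def by blast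
    moreover have "open w" using Wc \<open>w \<in> W\<close> unfolding cech_open_cover_def by blast
    ultimately show "\<exists>w e. w \<in> W \<and> e > 0 \<and> cball x e \<subseteq> w" using open_contains_cball by blast
  qed
  then obtain ww ee where wwee: "\<And>x. x \<in> C \<Longrightarrow> ww x \<in> W \<and> ee x > 0 \<and> cball x (ee x) \<subseteq> ww x"
    by metis
  have "C \<subseteq> (\<Union>x\<in>C. ball x (ee x))" using wwee by auto
  then obtain D where DC: "D \<subseteq> C" and finD: "finite D" and CD: "C \<subseteq> (\<Union>x\<in>D. ball x (ee x))"
    using compactE_image[OF compC, of C "\<lambda>x. ball x (ee x)"] by auto
  define K where "K G = B \<inter> \<Inter> ((\<lambda>x. cball x (ee x)) ` G)" for G
  define bad where "bad G \<longleftrightarrow> C \<inter> \<Inter> (ww ` G) = {}" for G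
  define N where "N = - \<Union> (K ` {G. G \<subseteq> D \<and> bad G})"
  have openN: "open N"
  proof -
    have "finite {G. G \<subseteq> D \<and> bad G}" using finD by simp
    moreover have "closed (K G)" for G unfolding K_def using clB by (intro closed_Int closed_Inter) auto
    ultimately have "closed (\<Union> (K ` {G. G \<subseteq> D \<and> bad G}))" by (intro closed_Union) auto
    then show ?thesis unfolding N_def by (rule open_Compl)
  qed
  have CN: "C \<subseteq> N"
  proof
    fix x assume xC: "x \<in> C"
    show "x \<in> N"
    proof (rule ccontr)
      assume "x \<notin> N"
      then obtain G where G: "G \<subseteq> D" "bad G" "x \<in> K G" unfolding N_def by blast
      have "x \<in> ww y" if "y \<in> G" for y
        using G that DC wwee[of y] unfolding K_def by blast
      then show False using G(2) xC unfolding bad_def by blast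
    qed
  qed
  define VW where "VW = (\<lambda>x. ball x (ee x) \<inter> N) ` D"
  define VU where "VU = (\<lambda>u. u - B) ` U"
  define VA where "VA = VW \<union> VU"
  define V where "V = insert (- A) VA"
  define \<xi> where "\<xi> v = (SOME x. x \<in> D \<and> v = ball x (ee x) \<inter> N)" for v
  have \<xi>: "\<xi> v \<in> D \<and> v = ball (\<xi> v) (ee (\<xi> v)) \<inter> N" if "v \<in> VW" for v
    unfolding \<xi>_def by (rule someI_ex) (use that VW_def in auto)
  define \<phi> where "\<phi> v = ww (\<xi> v)" for v
  define pt where "pt v = (if v \<in> VW then q (\<phi> v) else (SOME u. u \<in> U \<and> v = u - B))" for v
  define bt where "bt t = b (map \<phi> t)" for t
  define cc where "cc t = (if set t \<subseteq> VA then z (map pt t) - cech_cobdry bt t else 0)" for t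
  have \<phi>W: "\<phi> v \<in> W \<and> v \<subseteq> \<phi> v" if "v \<in> VW" for v
    using \<xi>[OF that] wwee[of "\<xi> v"] DC ball_subset_cball unfolding \<phi>_def by blast
  have refA: "cech_refines_via VA U pt"
    unfolding cech_refines_via_def
  proof
    fix v assume v: "v \<in> VA"
    show "pt v \<in> U \<and> v \<subseteq> pt v"
    proof (cases "v \<in> VW")
      case True
      then show ?thesis using \<phi>W[OF True] Wq unfolding pt_def cech_refines_via_def by auto
    next
      case False
      then have "v \<in> VU" using v VA_def by auto
      then have "\<exists>u. u \<in> U \<and> v = u - B" unfolding VU_def by auto
      then have "(SOME u. u \<in> U \<and> v = u - B) \<in> U \<and> v = (SOME u. u \<in> U \<and> v = u - B) - B"
        by (rule someI_ex)
      then show ?thesis using False unfolding pt_def by auto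
    qed
  qed
  have VUB: "v \<inter> B = {}" if "v \<in> VU" for v using that unfolding VU_def by auto
  have star: "z (map pt s) = cech_cobdry bt s"
    if n1: "\<not> n < -1" and sVA: "set s \<subseteq> VA" and len: "length s = nat (n + 1)" and sB: "B \<inter> \<Inter>(set s) \<noteq> {}" for s
  proof (cases "s = []")
    case True
    then have n: "nat (n + 2) = 1" using len n1 by simp
    obtain x where "x \<in> A" using Ane by blast
    then obtain u where u: "u \<in> U" "x \<in> u" using AX U unfolding cech_open_cover_def by blast
    then have "[u] \<in> cech_simplices X U (nat (n + 2))" using n \<open>x \<in> A\<close> AX
      unfolding cech_simplices_def by auto
    then have "cech_cobdry z [u] = 0" using cocz[OF n1] by blast
    then have "z [] = 0" by (simp add: cech_cobdry_def cech_delete_def)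
    then show ?thesis using True by (simp add: cech_cobdry_def)
  next
    case False
    obtain y where y: "y \<in> B" "y \<in> \<Inter>(set s)" using sB by blast
    have sVW: "set s \<subseteq> VW"
    proof
      fix v assume "v \<in> set s"
      then have "y \<in> v" "v \<in> VA" using y sVA by auto
      then show "v \<in> VW" using VUB y(1) VA_def by blast
    qed
    define G where "G = \<xi> ` set s"
    have GD: "G \<subseteq> D" using \<xi> sVW G_def by blast
    have yN: "y \<in> N"
    proof -
      have "hd s \<in> set s" using False by simp
      then show ?thesis using \<xi>[of "hd s"] sVW y by blast
    qed
    have "y \<in> K G"
    proof -
      have "y \<in> cball x (ee x)" if "x \<in> G" for x
      proof -
        obtain v where v: "v \<in> set s" "x = \<xi> v" using \<open>x \<in> G\<close> G_def by blast
        then have "y \<in> v" using y by blast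
        then show ?thesis using \<xi>[of v] sVW v ball_subset_cball by blast
      qed
      then show ?thesis unfolding K_def using y by blast
    qed
    then have nbad: "\<not> bad G" using yN GD unfolding N_def by blast
    have simp: "map \<phi> s \<in> cech_simplices C W (nat (n + 1))"
    proof -
      have "set (map \<phi> s) = ww ` G" unfolding G_def \<phi>_def by auto
      moreover have "set (map \<phi> s) \<subseteq> W" using \<phi>W sVW by auto
      ultimately show ?thesis using len nbad unfolding cech_simplices_def bad_def by auto
    qed
    have mp: "map pt s = map q (map \<phi> s)" using sVW unfolding pt_def by auto
    have "z (map q (map \<phi> s)) = cech_cobdry b (map \<phi> s)" using bprop[OF n1] simp by blast
    then show ?thesis unfolding mp bt_def cobdry_map .
  qed
  have Uo: "\<forall>u\<in>U. open u" and finU: "finite U" and XU: "X \<subseteq> \<Union>U"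
    using U unfolding cech_open_cover_def by auto
  have finVA: "finite VA" unfolding VA_def VW_def VU_def using finD finU by auto
  have openVA: "\<forall>v\<in>VA. open v"
    unfolding VA_def VW_def VU_def using Uo openN clB by (auto intro!: open_Diff open_Int)
  have AVA: "A \<subseteq> \<Union>VA"
  proof
    fix x assume xA: "x \<in> A"
    show "x \<in> \<Union>VA"
    proof (cases "x \<in> B")
      case True
      then have "x \<in> C" using xA C_def by blast
      then obtain d where "d \<in> D" "x \<in> ball d (ee d)" using CD by blast
      moreover have "x \<in> N" using CN \<open>x \<in> C\<close> by blast
      ultimately show ?thesis unfolding VA_def VW_def by blast
    next
      case False
      then obtain u where "u \<in> U" "x \<in> u" using xA AX XU by blast
      then show ?thesis using False unfolding VA_def VU_def by blast
    qed
  qed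
  have covA: "cech_open_cover A VA" using finVA openVA AVA unfolding cech_open_cover_def by blast
  have covAB: "cech_open_cover (A \<union> B) V"
    using finVA openVA AVA clA unfolding cech_open_cover_def V_def by (auto simp: open_Compl)
  have cc0: "cc s = 0" if n1: "\<not> n < -1" and len: "length s = nat (n + 1)" and sB: "B \<inter> \<Inter>(set s) \<noteq> {}" for s
    using star[OF n1 _ len sB] unfolding cc_def by simp
  have cocy: "cech_cocycle n (A \<union> B) V cc"
    unfolding cech_cocycle_def
  proof (cases "n < -1")
    case n1: False
    have "cech_cobdry cc t = 0" if t: "t \<in> cech_simplices (A \<union> B) V (nat (n + 2))" for t
    proof (cases "set t \<subseteq> VA")
      case True
      have "cech_cobdry cc t = cech_cobdry (\<lambda>s. z (map pt s) - cech_cobdry bt s) t"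
      proof (rule cobdry_cong)
        fix i assume "i < length t"
        then show "cc (cech_delete i t) = z (map pt (cech_delete i t)) - cech_cobdry bt (cech_delete i t)"
          using True set_delete[of i t] unfolding cc_def by auto
      qed
      also have "\<dots> = cech_cobdry z (map pt t)"
        by (simp add: cobdry_diff cobdry_cobdry cobdry_map)
      also have "\<dots> = 0"
      proof -
        have "t \<in> cech_simplices (A \<union> B) VA (nat (n + 2))" using t True by (auto simp: cech_simplices_def)
        then have "map pt t \<in> cech_simplices (A \<union> B) U (nat (n + 2))" by (rule simplices_map[OF refA])
        then have "map pt t \<in> cech_simplices X U (nat (n + 2))" using simplices_mono[of "A \<union> B" X] AX BX by blast
        then show ?thesis using cocz[OF n1] by blast
      qed
      finally show ?thesis .
    next
      case False
      have "cc (cech_delete i t) = 0" if i: "i < length t" for i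
      proof (cases "set (cech_delete i t) \<subseteq> VA")
        case True
        have "t ! i \<notin> VA" using False True set_delete_insert[OF i] by auto
        moreover have "set t \<subseteq> V" using t by (simp add: cech_simplices_def)
        then have "t ! i \<in> V" using nth_mem[OF i] by blast
        ultimately have tiA: "t ! i = - A" unfolding V_def by blast
        obtain y where y: "y \<in> A \<union> B" "y \<in> \<Inter>(set t)" using t by (auto simp: cech_simplices_def)
        have "y \<in> t ! i" using y i by auto
        then have "y \<in> B" using y tiA by auto
        moreover have "y \<in> \<Inter>(set (cech_delete i t))" using y set_delete[of i t] by blast
        moreover have "length (cech_delete i t) = nat (n + 1)"
          using t i n1 nat2[OF n1] by (auto simp: cech_simplices_def)
        ultimately show ?thesis using cc0[OF n1] by blast
      next
        case False
        then show ?thesis unfolding cc_def by simp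
      qed
      then show ?thesis unfolding cech_cobdry_def by (simp cong: if_cong)
    qed
    then show "n < - 1 \<or> (\<forall>t\<in>cech_simplices (A \<union> B) V (nat (n + 2)). cech_cobdry cc t = 0)" by blast
  qed simp
  have rep0: "cech_is_rep n (A \<union> B) (V, cc)" using covAB cocy unfolding cech_is_rep_def by simp
  have relB: "cech_rel n B ({UNIV}, \<lambda>_. 0) (V, cc)"
    unfolding cech_rel_def
  proof (intro exI conjI)
    show "cech_open_cover B V" using covAB unfolding cech_open_cover_def by blast
    show "cech_refines_via V (fst ({UNIV}, \<lambda>_. 0)) (\<lambda>_. UNIV)" by (simp add: cech_refines_via_def)
    show "cech_refines_via V (fst (V, cc)) id" by (simp add: cech_refines_via_def)
    show "cech_coboundary n B V (\<lambda>s. snd ({UNIV}, \<lambda>_. 0::'g) (map (\<lambda>_. UNIV) s) - snd (V, cc) (map id s))"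
      unfolding cech_coboundary_def
    proof (cases "n < -1")
      case n1: False
      have "\<forall>s\<in>cech_simplices B V (nat (n + 1)). 0 - cc s = cech_cobdry (\<lambda>_. 0) s"
        using cc0[OF n1] by (auto simp: cech_simplices_def cobdry_zero)
      then show "n < - 1 \<or> (\<exists>b. \<forall>s\<in>cech_simplices B V (nat (n + 1)).
          snd ({UNIV}, \<lambda>_. 0::'g) (map (\<lambda>_. UNIV) s) - snd (V, cc) (map id s) = cech_cobdry b s)"
        by auto
    qed simp
  qed
  have relA: "cech_rel n A (V, cc) (U, z)"
    unfolding cech_rel_def
  proof (intro exI conjI)
    show "cech_open_cover A VA" by (rule covA)
    show "cech_refines_via VA (fst (V, cc)) id" by (auto simp: cech_refines_via_def V_def)
    show "cech_refines_via VA (fst (U, z)) pt" using refA by simp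
    have "\<forall>s\<in>cech_simplices A VA (nat (n + 1)). cc s - z (map pt s) = cech_cobdry (\<lambda>t. - bt t) s"
      by (auto simp: cech_simplices_def cc_def cobdry_uminus)
    then show "cech_coboundary n A VA (\<lambda>s. snd (V, cc) (map id s) - snd (U, z) (map pt s))"
      unfolding cech_coboundary_def by auto
  qed
  show ?thesis using rep0 relB relA by blast
qed



theorem lemma2p2:
  fixes X A B :: "'a::metric_space set" and n :: int
    and \<alpha> :: "('a, 'g::ab_group_add) cech_rep set"
  assumes "compact X"
    and "\<alpha> \<in> cech_H n X" and "\<alpha> \<noteq> cech_zero n X"
    and "cech_carrier n X A \<alpha>"
    and "closed B" and "B \<subseteq> X"
  shows "A \<subseteq> B \<longleftrightarrow>
    (cech_kernel n B (A \<union> B) :: ('a, 'g) cech_rep set set) \<subseteq> cech_kernel n A (A \<union> B)"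
proof
  assume AB: "A \<subseteq> B"
  then have UAB: "A \<union> B = B" by blast
  show "(cech_kernel n B (A \<union> B) :: ('a, 'g) cech_rep set set) \<subseteq> cech_kernel n A (A \<union> B)"
  proof
    fix c :: "('a, 'g) cech_rep set"
    assume "c \<in> cech_kernel n B (A \<union> B)"
    then have cH: "c \<in> cech_H n B" and c0: "cech_incl n B B c = cech_zero n B"
      unfolding UAB cech_kernel_def by auto
    define r1 where "r1 = (SOME r. r \<in> c)"
    have r1c: "r1 \<in> c" using H_elim[OF cH] r1_def by simp
    have rep1: "cech_is_rep n B r1" using H_rep[OF cH r1c] .
    have "cech_class n B r1 = cech_class n B ({UNIV}, \<lambda>_. 0)"
      using c0 by (simp add: cech_incl_def cech_zero_def r1_def)
    then have "r1 \<in> cech_class n B ({UNIV}, \<lambda>_. 0)" using in_own_class[OF rep1] by simp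
    then have "cech_rel n B ({UNIV}, \<lambda>_. 0) r1" by (simp add: class_mem)
    then have "cech_rel n A ({UNIV}, \<lambda>_. 0) r1" using rel_mono AB by blast
    then have "cech_class n A ({UNIV}, \<lambda>_. 0) = cech_class n A r1"
      using class_eq zero_rep rep_mono[OF rep1 AB] by blast
    then show "c \<in> cech_kernel n A (A \<union> B)"
      unfolding UAB cech_kernel_def cech_incl_def cech_zero_def using cH by (simp add: r1_def)
  qed
next
  assume K: "(cech_kernel n B (A \<union> B) :: ('a, 'g) cech_rep set set) \<subseteq> cech_kernel n A (A \<union> B)"
  show "A \<subseteq> B"
  proof (rule ccontr)
    assume nAB: "\<not> A \<subseteq> B"
    have clA: "closed A" and AX: "A \<subseteq> X" and Ane: "A \<noteq> {}"
      and incA: "cech_incl n A X \<alpha> \<noteq> cech_zero n A"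
      and sub: "\<And>B'. closed B' \<Longrightarrow> B' \<subset> A \<Longrightarrow> cech_incl n B' X \<alpha> = cech_zero n B'"
      using assms(4) unfolding cech_carrier_def by auto
    define C where "C = A \<inter> B"
    have "cech_incl n C X \<alpha> = cech_zero n C"
      using sub[of C] nAB clA assms(5) unfolding C_def by blast
    define zr where "zr = (SOME r. r \<in> \<alpha>)"
    have zra: "zr \<in> \<alpha>" using H_elim[OF assms(2)] zr_def by simp
    have repz: "cech_is_rep n X zr" using H_rep[OF assms(2) zra] .
    have "cech_class n C zr = cech_class n C ({UNIV}, \<lambda>_. 0)"
      using \<open>cech_incl n C X \<alpha> = cech_zero n C\<close> by (simp add: cech_incl_def cech_zero_def zr_def)
    moreover have "zr \<in> cech_class n C zr" using in_own_class rep_mono[OF repz] AX C_def by blast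
    ultimately have "cech_rel n C ({UNIV}, \<lambda>_. 0) zr" by (simp add: class_mem)
    then have relC: "cech_rel n (A \<inter> B) ({UNIV}, \<lambda>_. 0) (fst zr, snd zr)" by (simp add: C_def)
    obtain r0 where rep0: "cech_is_rep n (A \<union> B) r0" and relB: "cech_rel n B ({UNIV}, \<lambda>_. 0) r0"
      and relA: "cech_rel n A r0 (fst zr, snd zr)"
      using construct[OF assms(1) clA assms(5) AX assms(6) Ane _ relC] repz by auto
    define c where "c = cech_class n (A \<union> B) r0"
    have cH: "c \<in> cech_H n (A \<union> B)" using rep0 unfolding c_def cech_H_def by blast
    define r1 where "r1 = (SOME r. r \<in> c)"
    have r1c: "r1 \<in> c" using H_elim[OF cH] r1_def by simp
    have rep1: "cech_is_rep n (A \<union> B) r1" using H_rep[OF cH r1c] .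
    have rel01: "cech_rel n (A \<union> B) r0 r1" using r1c unfolding c_def by (simp add: class_mem)
    have "cech_rel n B r0 r1" using rel_mono[OF rel01] by blast
    then have "cech_rel n B ({UNIV}, \<lambda>_. 0) r1" using rel_trans rep_mono[OF rep0] relB by blast
    then have "cech_class n B ({UNIV}, \<lambda>_. 0) = cech_class n B r1"
      using class_eq zero_rep rep_mono[OF rep1] by blast
    then have "c \<in> cech_kernel n B (A \<union> B)"
      unfolding cech_kernel_def cech_incl_def cech_zero_def using cH by (simp add: r1_def)
    then have "c \<in> cech_kernel n A (A \<union> B)" using K by blast
    then have cA: "cech_class n A r1 = cech_class n A ({UNIV}, \<lambda>_. 0)"
      unfolding cech_kernel_def cech_incl_def cech_zero_def by (simp add: r1_def)
    have "cech_rel n A r0 r1" using rel_mono[OF rel01] by blast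
    moreover have "cech_rel n A zr r0" using rel_sym[OF relA] by simp
    ultimately have "cech_rel n A zr r1" using rel_trans rep_mono[OF rep0] by blast
    then have "cech_class n A zr = cech_class n A r1"
      using class_eq rep_mono[OF repz AX] rep_mono[OF rep1] by blast
    then have "cech_incl n A X \<alpha> = cech_zero n A"
      using cA unfolding cech_incl_def cech_zero_def by (simp add: zr_def)
    then show False using incA by contradiction
  qed
qed

end
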